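(* Let $\Omega\subset\mathbb{R}^N$ be a bounded open Lipschitz set. Then there exist constants $C_0=C_0(N,\Omega)>0$ and $\delta_0=\delta_0(N,\Omega)\in(0,1)$ such that $$\int_{\Omega\setminus B_\delta(x)}|x-y|^{-N-2s}\,dy\ge C_0\log\frac{\delta_0}{\delta}\qquad\text{for all }\delta\in(0,\delta_0),\ x\in\overline\Omega,\ s\in[0,1).$$
   Context: A bounded open set $\Omega\subset\mathbb{R}^N$ is a Lipschitz set if each boundary point has a neighborhood in which $\partial\Omega$ is, after rotation, the graph of a Lipschitz function. $B_\delta(x)$ denotes the open ball of radius $\delta$ centered at $x$. *)

theory Defs
  imports "HOL-Analysis.Analysis"
begin

definition is_lipschitz_set :: "'a::euclidean_space set \<Rightarrow> bool" where
  "is_lipschitz_set \<Omega> \<longleftrightarrow>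
     (\<forall>p\<in>frontier \<Omega>. \<exists>(U::'a set) (R::'a \<Rightarrow> 'a) (g::'a \<Rightarrow> real) (L::real) (e::'a).
        open U \<and> p \<in> U \<and> orthogonal_transformation R \<and> e \<in> Basis \<and>
        L-lipschitz_on {h. h \<bullet> e = 0} g \<and>
        frontier \<Omega> \<inter> U = R ` {h + g h *\<^sub>R e | h. h \<bullet> e = 0} \<inter> U)"

end

theory Submission
  imports Defs
begin


lemma local_cone:
  fixes \<Omega> U :: "'a::euclidean_space set" and R :: "'a \<Rightarrow> 'a" and g :: "'a \<Rightarrow> real"
  assumes opn: "open \<Omega>" and R: "orthogonal_transformation R" and e: "e \<in> Basis"
    and lip: "L-lipschitz_on {h. h \<bullet> e = 0} g"
    and fr: "frontier \<Omega> \<inter> U = R ` {h + g h *\<^sub>R e | h. h \<bullet> e = 0} \<inter> U"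
    and bU: "ball p \<beta> \<subseteq> U"
    and y: "y \<in> \<Omega>" "dist y p < \<beta>/2" and t: "0 < t" "t < \<beta>/4"
  shows "\<exists>z. ball z (t/(2*L+2)) \<subseteq> \<Omega> \<and> ball z (t/(2*L+2)) \<subseteq> ball y (2*t)"
proof -
  have L0: "L \<ge> 0" using lip by (rule lipschitz_on_nonneg)
  have linR: "linear R" using R by (rule orthogonal_transformation_linear)
  have Rn: "norm (R a - R b) = norm (a - b)" for a b
  proof -
    have "R a - R b = R (a - b)" by (simp add: linear_diff[OF linR])
    then show ?thesis by (simp add: orthogonal_transformation_norm[OF R])
  qed
  obtain ys where ys: "y = R ys" using orthogonal_transformation_surj[OF R] by (metis surjD)
  define P where "P v = v - (v \<bullet> e) *\<^sub>R e" for v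
  have ee: "e \<bullet> e = 1" using e by simp
  have Pe: "P v \<bullet> e = 0" for v by (simp add: P_def inner_diff_left ee)
  have Pdiff: "P (a - b) = P a - P b" for a b by (simp add: P_def algebra_simps inner_diff_left)
  have PE: "P e = 0" by (simp add: P_def ee)
  have Pnorm: "norm (P v) \<le> 2 * norm v" for v
  proof -
    have "norm (P v) \<le> norm v + norm ((v \<bullet> e) *\<^sub>R e)" unfolding P_def by (rule norm_triangle_ineq4)
    also have "norm ((v \<bullet> e) *\<^sub>R e) = \<bar>v \<bullet> e\<bar>" using e by simp
    also have "\<bar>v \<bullet> e\<bar> \<le> norm v" using e by (rule Basis_le_norm)
    finally show ?thesis by simp
  qed
  have graph: "v \<bullet> e = g (P v)" if "v \<in> {h + g h *\<^sub>R e | h. h \<bullet> e = 0}" for v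
  proof -
    from that obtain h where h: "h \<bullet> e = 0" "v = h + g h *\<^sub>R e" by blast
    then have "v \<bullet> e = g h" by (simp add: inner_add_left ee)
    moreover have "P v = h" using h \<open>v \<bullet> e = g h\<close> by (simp add: P_def)
    ultimately show ?thesis by simp
  qed
  have nofr: "q \<notin> frontier \<Omega>" if "q \<in> \<Omega>" for q
    using that opn by (simp add: frontier_def interior_open)
  have yU: "y \<in> U" using bU y(2) t by (auto simp: dist_commute)
  have ne: "ys \<bullet> e \<noteq> g (P ys)"
  proof
    assume h: "ys \<bullet> e = g (P ys)"
    have "ys = P ys + g (P ys) *\<^sub>R e" using h by (simp add: P_def)
    then have "ys \<in> {h + g h *\<^sub>R e | h. h \<bullet> e = 0}" using Pe by blast
    then have "y \<in> frontier \<Omega>" using fr yU ys by blast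
    then show False using nofr y(1) by blast
  qed
  define \<sigma> where "\<sigma> = (if ys \<bullet> e > g (P ys) then 1 else -1::real)"
  have spos: "\<sigma> * (ys \<bullet> e - g (P ys)) > 0" using ne by (auto simp: \<sigma>_def)
  have sabs: "\<bar>\<sigma>\<bar> = 1" by (simp add: \<sigma>_def)
  define cone where "cone v \<longleftrightarrow> \<sigma> * ((v - ys) \<bullet> e) > L * norm (P (v - ys))" for v
  have cone_above: "v \<bullet> e \<noteq> g (P v)" if "cone v" for v
  proof -
    have "\<bar>g (P ys) - g (P v)\<bar> \<le> L * dist (P ys) (P v)"
      using lipschitz_onD[OF lip, of "P ys" "P v"] Pe by (simp add: dist_real_def)
    also have "dist (P ys) (P v) = norm (P (v - ys))"
      by (simp add: Pdiff dist_norm norm_minus_commute)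
    finally have l: "\<bar>g (P ys) - g (P v)\<bar> \<le> L * norm (P (v - ys))" .
    have "\<sigma> * (g (P ys) - g (P v)) \<ge> - \<bar>g (P ys) - g (P v)\<bar>"
      using sabs by (auto simp: \<sigma>_def split: if_splits)
    have "\<sigma> * (v \<bullet> e - g (P v)) = \<sigma> * ((v - ys) \<bullet> e) + \<sigma> * (ys \<bullet> e - g (P ys)) + \<sigma> * (g (P ys) - g (P v))"
      by (simp add: inner_diff_left algebra_simps)
    then have "\<sigma> * (v \<bullet> e - g (P v)) > 0"
      using that[unfolded cone_def] spos l \<open>\<sigma> * (g (P ys) - g (P v)) \<ge> - \<bar>g (P ys) - g (P v)\<bar>\<close> by linarith
    then show ?thesis by auto
  qed
  have cone_scale: "cone (ys + lam *\<^sub>R (v - ys))" if "cone v" "0 < lam" for v lam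
  proof -
    have "P (lam *\<^sub>R (v - ys)) = lam *\<^sub>R P (v - ys)" by (simp add: P_def algebra_simps)
    then have "L * norm (P (lam *\<^sub>R (v - ys))) = lam * (L * norm (P (v - ys)))"
      using that(2) by simp
    also have "\<dots> < lam * (\<sigma> * ((v - ys) \<bullet> e))"
      using that unfolding cone_def by simp
    finally show ?thesis unfolding cone_def by (simp add: algebra_simps)
  qed
  define s where "s = t/(2*L+2)"
  have s0: "0 < s" and st: "(2*L+2) * s = t" using t L0 by (auto simp: s_def)
  define ws where "ws = ys + (\<sigma> * t) *\<^sub>R e"
  have cone_ball: "cone v" if "norm (v - ws) < s" for v
  proof -
    have vy: "v - ys = (v - ws) + (\<sigma> * t) *\<^sub>R e" by (simp add: ws_def)
    have "\<sigma> * ((v - ys) \<bullet> e) = \<sigma> * ((v - ws) \<bullet> e) + \<sigma> * \<sigma> * t"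
      unfolding vy by (simp add: inner_add_left ee algebra_simps)
    moreover have "\<sigma> * \<sigma> * t = t" using sabs by (simp add: \<sigma>_def)
    moreover have "\<bar>\<sigma> * ((v - ws) \<bullet> e)\<bar> \<le> norm (v - ws)"
      using Basis_le_norm[OF e, of "v - ws"] sabs by (simp add: abs_mult)
    ultimately have a: "\<sigma> * ((v - ys) \<bullet> e) > t - s" using that by linarith
    have "P (v - ys) = P (v - ws)" unfolding vy by (simp add: P_def algebra_simps ee)
    then have "L * norm (P (v - ys)) \<le> L * (2 * norm (v - ws))"
      using Pnorm L0 by (simp add: mult_left_mono)
    also have "\<dots> \<le> 2 * L * s" using L0 that by (simp add: mult_left_mono less_imp_le)
    finally show ?thesis unfolding cone_def using a st s0 by (simp add: algebra_simps)
  qed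
  have inO: "R v \<in> \<Omega>" if v: "norm (v - ws) < s" for v
  proof (rule ccontr)
    assume nin: "R v \<notin> \<Omega>"
    let ?S = "R ` closed_segment ys v"
    have con: "connected ?S"
      by (intro connected_continuous_image connected_segment linear_continuous_on linR[unfolded linear_conv_bounded_linear])
    have "?S \<inter> frontier \<Omega> \<noteq> {}"
    proof (rule connected_Int_frontier[OF con])
      show "?S \<inter> \<Omega> \<noteq> {}" using y(1) ys by auto
      show "?S - \<Omega> \<noteq> {}" using nin by auto
    qed
    then obtain u where u: "u \<in> closed_segment ys v" "R u \<in> frontier \<Omega>" by auto
    from u(1) obtain lam where lam: "0 \<le> lam" "lam \<le> 1" "u = (1 - lam) *\<^sub>R ys + lam *\<^sub>R v"
      unfolding closed_segment_def by auto
    have u2: "u = ys + lam *\<^sub>R (v - ys)" using lam(3) by (simp add: algebra_simps)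
    show False
    proof (cases "lam = 0")
      case True
      then have "R u = y" using u2 ys by simp
      then show False using u(2) nofr y(1) by simp
    next
      case False
      then have cu: "cone u" using u2 cone_scale cone_ball[OF v] lam by simp
      have "norm (v - ys) \<le> norm (v - ws) + norm (ws - ys)" by (rule norm_diff_triangle_le[of _ ws]) simp_all
      also have "norm (ws - ys) = t" using sabs t e by (simp add: ws_def abs_mult)
      finally have vys: "norm (v - ys) < 2 * t" using v st s0 L0
        by (smt (verit) mult_le_cancel_right1)
      have "norm (u - ys) = lam * norm (v - ys)" using u2 lam by simp
      also have "\<dots> \<le> norm (v - ys)" using lam by (simp add: mult_left_le_one_le)
      finally have "dist (R u) y < 2 * t" using vys ys Rn by (simp add: dist_norm)
      then have "dist p (R u) < \<beta>" using y(2) t dist_triangle[of p "R u" y]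
        by (simp add: dist_commute)
      then have "R u \<in> U" using bU by auto
      then have "R u \<in> R ` {h + g h *\<^sub>R e | h. h \<bullet> e = 0}" using fr u(2) by blast
      then obtain w where w: "w \<in> {h + g h *\<^sub>R e | h. h \<bullet> e = 0}" "R u = R w" by blast
      then have "u = w" using orthogonal_transformation_inj[OF R] by (simp add: inj_eq)
      then show False using graph[OF w(1)] cone_above[OF cu] by simp
    qed
  qed
  show ?thesis
  proof (intro exI conjI)
    show "ball (R ws) (t/(2*L+2)) \<subseteq> \<Omega>"
    proof
      fix q assume q: "q \<in> ball (R ws) (t/(2*L+2))"
      obtain v where v: "q = R v" using orthogonal_transformation_surj[OF R] by (metis surjD)
      have "norm (v - ws) < s" using q v Rn by (simp add: s_def dist_norm norm_minus_commute)
      then show "q \<in> \<Omega>" using inO v by simp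
    qed
    show "ball (R ws) (t/(2*L+2)) \<subseteq> ball y (2*t)"
    proof
      fix q assume q: "q \<in> ball (R ws) (t/(2*L+2))"
      obtain v where v: "q = R v" using orthogonal_transformation_surj[OF R] by (metis surjD)
      have vw: "norm (v - ws) < s" using q v Rn by (simp add: s_def dist_norm norm_minus_commute)
      have "norm (v - ys) \<le> norm (v - ws) + norm (ws - ys)" by (rule norm_diff_triangle_le[of _ ws]) simp_all
      also have "norm (ws - ys) = t" using sabs t e by (simp add: ws_def abs_mult)
      finally have "norm (v - ys) < 2 * t" using vw st s0 L0
        by (smt (verit) mult_le_cancel_right1)
      then show "q \<in> ball y (2*t)" using v ys Rn by (simp add: dist_norm norm_minus_commute)
    qed
  qed
qed

lemma corkscrew_local:
  fixes \<Omega> :: "'a::euclidean_space set"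
  assumes opn: "open \<Omega>" and lipset: "is_lipschitz_set \<Omega>" and q: "q \<in> closure \<Omega>"
  shows "\<exists>\<kappa>>0. \<exists>r>0. \<forall>x\<in>ball q r \<inter> closure \<Omega>. \<forall>\<rho>. 0 < \<rho> \<and> \<rho> < r \<longrightarrow>
           (\<exists>z. ball z (\<kappa>*\<rho>) \<subseteq> \<Omega> \<and> ball z (\<kappa>*\<rho>) \<subseteq> ball x \<rho>)"
proof (cases "q \<in> \<Omega>")
  case True
  then obtain \<eta> where eta: "\<eta> > 0" "ball q \<eta> \<subseteq> \<Omega>" using opn open_contains_ball by blast
  show ?thesis
  proof (rule exI[of _ 1], rule conjI, simp, rule exI[of _ "\<eta>/2"], intro conjI ballI allI impI)
    fix x \<rho> assume x: "x \<in> ball q (\<eta>/2) \<inter> closure \<Omega>" and r: "0 < \<rho> \<and> \<rho> < \<eta>/2"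
    have "ball x \<rho> \<subseteq> ball q \<eta>"
    proof
      fix w assume "w \<in> ball x \<rho>"
      then have "dist x w < \<rho>" by simp
      moreover have "dist q x < \<eta>/2" using x by simp
      moreover have "dist q w \<le> dist q x + dist x w" by (rule dist_triangle)
      ultimately show "w \<in> ball q \<eta>" using r by simp
    qed
    then show "\<exists>z. ball z (1*\<rho>) \<subseteq> \<Omega> \<and> ball z (1*\<rho>) \<subseteq> ball x \<rho>" using eta by auto
  qed (use eta in auto)
next
  case False
  then have qf: "q \<in> frontier \<Omega>" using q opn by (simp add: frontier_def interior_open)
  obtain U :: "'a set" and R :: "'a \<Rightarrow> 'a" and g :: "'a \<Rightarrow> real" and L :: real and e :: 'a where UR: "open U" "q \<in> U" "orthogonal_transformation R" "e \<in> Basis"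
      "L-lipschitz_on {h. h \<bullet> e = 0} g"
      "frontier \<Omega> \<inter> U = R ` {h + g h *\<^sub>R e | h. h \<bullet> e = 0} \<inter> U"
  proof -
    have "\<exists>(U::'a set) (R::'a \<Rightarrow> 'a) (g::'a \<Rightarrow> real) (L::real) (e::'a).
        open U \<and> q \<in> U \<and> orthogonal_transformation R \<and> e \<in> Basis \<and>
        L-lipschitz_on {h. h \<bullet> e = 0} g \<and>
        frontier \<Omega> \<inter> U = R ` {h + g h *\<^sub>R e | h. h \<bullet> e = 0} \<inter> U"
      using lipset qf unfolding is_lipschitz_set_def by (rule bspec)
    then show ?thesis by (elim exE conjE) (rule that; assumption)
  qed
  have L0: "L \<ge> 0" using UR(5) by (rule lipschitz_on_nonneg)
  obtain \<beta> where b: "\<beta> > 0" "ball q \<beta> \<subseteq> U" using UR(1,2) open_contains_ball by blast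
  show ?thesis
  proof (rule exI[of _ "1/(4*(2*L+2))"], rule conjI, use L0 in simp, rule exI[of _ "\<beta>/4"], intro conjI ballI allI impI)
    show "\<beta>/4 > 0" using b by simp
    fix x \<rho> assume x: "x \<in> ball q (\<beta>/4) \<inter> closure \<Omega>" and r: "0 < \<rho> \<and> \<rho> < \<beta>/4"
    have m: "min (\<rho>/2) (\<beta>/4) > 0" using r b by simp
    from x have xc: "x \<in> closure \<Omega>" by simp
    then obtain y where y: "y \<in> \<Omega>" "dist y x < min (\<rho>/2) (\<beta>/4)"
      using m unfolding closure_approachable by blast
    have yq: "dist y q < \<beta>/2"
    proof -
      have "dist q x < \<beta>/4" using x by simp
      moreover have "dist y q \<le> dist y x + dist x q" by (rule dist_triangle)
      ultimately show ?thesis using y(2) by (simp add: dist_commute)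
    qed
    obtain z where z: "ball z ((\<rho>/4)/(2*L+2)) \<subseteq> \<Omega>" "ball z ((\<rho>/4)/(2*L+2)) \<subseteq> ball y (2*(\<rho>/4))"
    proof -
      have t0: "0 < \<rho>/4" "\<rho>/4 < \<beta>/4" using r by auto
      show ?thesis using local_cone[OF opn UR(3,4,5,6) b(2) y(1) yq t0] that by blast
    qed
    have eq: "1/(4*(2*L+2)) * \<rho> = (\<rho>/4)/(2*L+2)" by simp
    have "ball y (2*(\<rho>/4)) \<subseteq> ball x \<rho>"
    proof
      fix w assume "w \<in> ball y (2*(\<rho>/4))"
      then have "dist y w < \<rho>/2" by simp
      moreover have "dist x w \<le> dist x y + dist y w" by (rule dist_triangle)
      ultimately show "w \<in> ball x \<rho>" using y(2) by (simp add: dist_commute)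
    qed
    then show "\<exists>z. ball z (1/(4*(2*L+2)) * \<rho>) \<subseteq> \<Omega> \<and> ball z (1/(4*(2*L+2)) * \<rho>) \<subseteq> ball x \<rho>"
      using z unfolding eq by blast
  qed
qed

lemma corkscrew0:
  fixes \<Omega> :: "'a::euclidean_space set"
  assumes bnd: "bounded \<Omega>" and opn: "open \<Omega>" and ne: "\<Omega> \<noteq> {}" and lipset: "is_lipschitz_set \<Omega>"
  shows "\<exists>\<kappa>>0. \<exists>r>0. \<forall>x\<in>closure \<Omega>. \<forall>\<rho>. 0 < \<rho> \<and> \<rho> < r \<longrightarrow>
           (\<exists>z. ball z (\<kappa>*\<rho>) \<subseteq> \<Omega> \<and> ball z (\<kappa>*\<rho>) \<subseteq> ball x \<rho>)"
proof -
  define Q where "Q \<kappa> x \<rho> \<longleftrightarrow> (\<exists>z. ball z (\<kappa>*\<rho>) \<subseteq> \<Omega> \<and> ball z (\<kappa>*\<rho>) \<subseteq> ball x \<rho>)" for \<kappa> x \<rho>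
  have Qmono: "Q \<kappa> x \<rho>" if "Q \<kappa>' x \<rho>" "0 < \<rho>" "\<kappa> \<le> \<kappa>'" for \<kappa> \<kappa>' x \<rho>
  proof -
    from that(1) obtain z where z: "ball z (\<kappa>'*\<rho>) \<subseteq> \<Omega>" "ball z (\<kappa>'*\<rho>) \<subseteq> ball x \<rho>"
      unfolding Q_def by blast
    have "ball z (\<kappa>*\<rho>) \<subseteq> ball z (\<kappa>'*\<rho>)"
      using that(2,3) by (intro subset_ball mult_right_mono) auto
    then show ?thesis unfolding Q_def using z by blast
  qed
  have loc: "\<forall>q\<in>closure \<Omega>. \<exists>\<kappa>. 0 < \<kappa> \<and> (\<exists>r. 0 < r \<and> (\<forall>x\<in>ball q r \<inter> closure \<Omega>. \<forall>\<rho>. 0 < \<rho> \<and> \<rho> < r \<longrightarrow> Q \<kappa> x \<rho>))"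
    unfolding Q_def using corkscrew_local[OF opn lipset] by blast
  then obtain K where K: "\<forall>q\<in>closure \<Omega>. 0 < K q \<and> (\<exists>r. 0 < r \<and> (\<forall>x\<in>ball q r \<inter> closure \<Omega>. \<forall>\<rho>. 0 < \<rho> \<and> \<rho> < r \<longrightarrow> Q (K q) x \<rho>))"
    by (rule bchoice[elim_format]) blast
  then have "\<forall>q\<in>closure \<Omega>. \<exists>r. 0 < r \<and> (\<forall>x\<in>ball q r \<inter> closure \<Omega>. \<forall>\<rho>. 0 < \<rho> \<and> \<rho> < r \<longrightarrow> Q (K q) x \<rho>)"
    by blast
  then obtain Rr where Rr: "\<forall>q\<in>closure \<Omega>. 0 < Rr q \<and> (\<forall>x\<in>ball q (Rr q) \<inter> closure \<Omega>. \<forall>\<rho>. 0 < \<rho> \<and> \<rho> < Rr q \<longrightarrow> Q (K q) x \<rho>)"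
    by (rule bchoice[elim_format]) blast
  have Kpos: "0 < K q" if "q \<in> closure \<Omega>" for q using K that by blast
  have Rpos: "0 < Rr q" if "q \<in> closure \<Omega>" for q using Rr that by blast
  have RQ: "Q (K q) x \<rho>" if "q \<in> closure \<Omega>" "x \<in> ball q (Rr q)" "x \<in> closure \<Omega>" "0 < \<rho>" "\<rho> < Rr q" for q x \<rho>
    using Rr that by blast
  have cpt: "compact (closure \<Omega>)" using bnd by (simp add: compact_closure)
  have cov: "closure \<Omega> \<subseteq> (\<Union>q\<in>closure \<Omega>. ball q (Rr q))"
  proof
    fix q assume q: "q \<in> closure \<Omega>"
    then have "q \<in> ball q (Rr q)" using Rpos[OF q] by simp
    then show "q \<in> (\<Union>q\<in>closure \<Omega>. ball q (Rr q))" using q by blast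
  qed
  obtain C where C: "C \<subseteq> closure \<Omega>" "finite C" "closure \<Omega> \<subseteq> (\<Union>q\<in>C. ball q (Rr q))"
  proof (rule compactE_image[OF cpt _ cov])
    fix T show "open (ball T (Rr T))" by simp
  next
    fix C' assume "C' \<subseteq> closure \<Omega>" "finite C'" "closure \<Omega> \<subseteq> (\<Union>q\<in>C'. ball q (Rr q))"
    then show thesis using that by blast
  qed
  obtain w where w: "w \<in> \<Omega>" using ne by blast
  then have "w \<in> closure \<Omega>" using closure_subset by blast
  then have Cne: "C \<noteq> {}" using C(3) by blast
  define \<kappa> where "\<kappa> = Min (K ` C)"
  define r where "r = Min (Rr ` C)"
  have k0: "\<kappa> > 0" unfolding \<kappa>_def
    using C(1,2) Cne Kpos by (subst Min_gr_iff) auto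
  have r0: "r > 0" unfolding r_def
    using C(1,2) Cne Rpos by (subst Min_gr_iff) auto
  have main: "Q \<kappa> x \<rho>" if x: "x \<in> closure \<Omega>" and rho: "0 < \<rho>" "\<rho> < r" for x \<rho>
  proof -
    obtain q where q: "q \<in> C" "x \<in> ball q (Rr q)" using C(3) x by blast
    have qc: "q \<in> closure \<Omega>" using q(1) C(1) by blast
    have "r \<le> Rr q" unfolding r_def using C(2) q(1) by simp
    moreover have kq: "\<kappa> \<le> K q" unfolding \<kappa>_def using C(2) q(1) by simp
    ultimately have "Q (K q) x \<rho>" using RQ[OF qc q(2) x rho(1)] rho(2) by linarith
    then show ?thesis using Qmono rho(1) kq by blast
  qed
  show ?thesis
    apply (rule exI[of _ \<kappa>], rule conjI[OF k0], rule exI[of _ r], rule conjI[OF r0])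
    using main unfolding Q_def by blast
qed

lemma corkscrew:
  fixes \<Omega> :: "'a::euclidean_space set"
  assumes bnd: "bounded \<Omega>" and opn: "open \<Omega>" and ne: "\<Omega> \<noteq> {}" and lipset: "is_lipschitz_set \<Omega>"
  shows "\<exists>\<kappa> r. 0 < \<kappa> \<and> \<kappa> < 1 \<and> 0 < r \<and> (\<forall>x\<in>closure \<Omega>. \<forall>\<rho>. 0 < \<rho> \<and> \<rho> < r \<longrightarrow>
           (\<exists>z. ball z (\<kappa>*\<rho>) \<subseteq> \<Omega> \<and> ball z (\<kappa>*\<rho>) \<subseteq> ball x \<rho> \<and> ball z (\<kappa>*\<rho>) \<inter> ball x (\<kappa>*\<rho>) = {}))"
proof -
  obtain \<kappa>0 r where k0: "\<kappa>0 > 0" and r: "r > 0" and P: "\<forall>x\<in>closure \<Omega>. \<forall>\<rho>. 0 < \<rho> \<and> \<rho> < r \<longrightarrow>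
           (\<exists>z. ball z (\<kappa>0*\<rho>) \<subseteq> \<Omega> \<and> ball z (\<kappa>0*\<rho>) \<subseteq> ball x \<rho>)"
    using corkscrew0[OF bnd opn ne lipset] by blast
  obtain b :: 'a where b: "b \<in> Basis" using nonempty_Basis by blast
  define \<kappa> where "\<kappa> = min \<kappa>0 1 / 4"
  have kpos: "0 < \<kappa>" "\<kappa> < 1" using k0 by (auto simp: \<kappa>_def)
  have main: "\<exists>z. ball z (\<kappa>*\<rho>) \<subseteq> \<Omega> \<and> ball z (\<kappa>*\<rho>) \<subseteq> ball x \<rho> \<and> ball z (\<kappa>*\<rho>) \<inter> ball x (\<kappa>*\<rho>) = {}"
    if x: "x \<in> closure \<Omega>" and rho: "0 < \<rho>" "\<rho> < r" for x \<rho>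
  proof -
    obtain z0 where z0: "ball z0 (\<kappa>0*\<rho>) \<subseteq> \<Omega>" "ball z0 (\<kappa>0*\<rho>) \<subseteq> ball x \<rho>"
      using P x rho by blast
    define a where "a = min \<kappa>0 1 * \<rho>"
    have a0: "0 < a" using k0 rho by (simp add: a_def)
    have aa: "ball z0 a \<subseteq> ball z0 (\<kappa>0*\<rho>)"
      unfolding a_def using rho by (intro subset_ball mult_right_mono) auto
    define u where "u = (if (z0 - x) \<bullet> b \<ge> 0 then b else - b)"
    have nu: "norm u = 1" using b by (simp add: u_def)
    have zu: "(z0 - x) \<bullet> u \<ge> 0" by (simp add: u_def)
    define z where "z = z0 + (a/2) *\<^sub>R u"
    have ka: "\<kappa> * \<rho> = a/4" by (simp add: \<kappa>_def a_def)
    have sub: "ball z (a/4) \<subseteq> ball z0 a"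
    proof
      fix w assume w: "w \<in> ball z (a/4)"
      have "dist z0 z = a/2" using nu a0 by (simp add: z_def dist_norm)
      moreover have "dist z0 w \<le> dist z0 z + dist z w" by (rule dist_triangle)
      ultimately show "w \<in> ball z0 a" using w a0 by (simp; linarith)
    qed
    have far: "norm (z - x) \<ge> a/2"
    proof -
      have "(z - x) \<bullet> u = (z0 - x) \<bullet> u + a/2" using nu
        by (simp add: z_def inner_add_left inner_diff_left algebra_simps dot_square_norm power2_eq_square[symmetric])
      moreover have "(z - x) \<bullet> u \<le> norm (z - x)"
        using Cauchy_Schwarz_ineq2[of "z - x" u] nu by simp
      ultimately show ?thesis using zu by simp
    qed
    have disj: "ball z (a/4) \<inter> ball x (a/4) = {}"
    proof (rule ccontr)
      assume "ball z (a/4) \<inter> ball x (a/4) \<noteq> {}"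
      then obtain w where w: "dist z w < a/4" "dist x w < a/4" by auto
      have "norm (z - x) = dist z x" by (simp add: dist_norm)
      also have "\<dots> \<le> dist z w + dist x w" by (metis dist_commute dist_triangle)
      finally show False using w far by simp
    qed
    show ?thesis
      apply (rule exI[of _ z])
      unfolding ka using sub aa z0 disj by blast
  qed
  show ?thesis
    apply (rule exI[of _ \<kappa>], rule exI[of _ r])
    using kpos r main by blast
qed



lemma lower_bound:
  fixes \<Omega> :: "'a::euclidean_space set"
  assumes bnd: "bounded \<Omega>" and opn: "open \<Omega>"
    and k: "0 < \<kappa>" "\<kappa> < 1" and r1: "0 < r1" "r1 \<le> 1"
    and CS: "\<forall>x\<in>closure \<Omega>. \<forall>\<rho>. 0 < \<rho> \<and> \<rho> < r1 \<longrightarrow>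
           (\<exists>z. ball z (\<kappa>*\<rho>) \<subseteq> \<Omega> \<and> ball z (\<kappa>*\<rho>) \<subseteq> ball x \<rho> \<and> ball z (\<kappa>*\<rho>) \<inter> ball x (\<kappa>*\<rho>) = {})"
    and d: "0 < \<delta>" "\<delta> < r1*\<kappa>/2" and x: "x \<in> closure \<Omega>" and s: "0 \<le> s"
  shows "measure lborel (ball (0::'a) 1) * \<kappa>^DIM('a) / ln (1/\<kappa>) * ln ((r1*\<kappa>/2)/\<delta>)
          \<le> integral (\<Omega> - ball x \<delta>) (\<lambda>y. norm (x - y) powr (- real DIM('a) - 2 * s))"
proof -
  define \<delta>0 where "\<delta>0 = r1*\<kappa>/2"
  define N where "N = DIM('a)"
  define \<omega> where "\<omega> = measure lborel (ball (0::'a) 1)"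
  define Ex where "Ex = - real N - 2 * s"
  define f where "f y = norm (x - y) powr Ex" for y
  define S where "S = \<Omega> - ball x \<delta>"
  have Ex0: "Ex \<le> 0" using s by (simp add: Ex_def)
  have om: "\<omega> > 0" unfolding \<omega>_def by (rule content_ball_pos) simp
  have lk: "ln (1/\<kappa>) > 0" using k by simp
  have dd: "\<delta>0/\<delta> > 1" using d by (simp add: \<delta>0_def)
  define a where "a = ln (\<delta>0/\<delta>) / ln (1/\<kappa>)"
  have a0: "a \<ge> 0" unfolding a_def using dd lk by simp
  define m where "m = nat \<lfloor>a\<rfloor>"
  define n where "n = Suc m"
  have ma: "real m \<le> a" unfolding m_def using a0 by (simp add: of_nat_nat)
  have an: "a \<le> real n" unfolding n_def m_def using a0
    by (simp add: of_nat_nat) linarith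
  define \<rho> where "\<rho> k = \<delta> / \<kappa>^k" for k
  have rpos: "\<rho> k > 0" for k using d k by (simp add: \<rho>_def)
  have rmono: "\<rho> j \<le> \<rho> k" if "j \<le> k" for j k
  proof -
    have "\<kappa>^k \<le> \<kappa>^j" using that k by (intro power_decreasing) auto
    then show ?thesis unfolding \<rho>_def using d k by (intro divide_left_mono) auto
  qed
  have rstep: "\<kappa> * \<rho> (Suc k) = \<rho> k" for k using k by (simp add: \<rho>_def)
  have r0: "\<rho> 0 = \<delta>" by (simp add: \<rho>_def)
  have pm: "(1/\<kappa>)^m \<le> \<delta>0/\<delta>"
  proof -
    have "(1/\<kappa>)^m = exp (ln (1/\<kappa>))^m" using k by simp
    also have "\<dots> = exp (real m * ln (1/\<kappa>))" by (rule exp_of_nat_mult[symmetric])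
    also have "\<dots> \<le> exp (a * ln (1/\<kappa>))" using ma lk by (intro exp_mono mult_right_mono) auto
    also have "a * ln (1/\<kappa>) = ln (\<delta>0/\<delta>)" unfolding a_def using lk by simp
    also have "exp (ln (\<delta>0/\<delta>)) = \<delta>0/\<delta>" using dd by simp
    finally show ?thesis .
  qed
  have rn: "\<rho> n < r1"
  proof -
    have "\<rho> n = (\<delta>/\<kappa>) * (1/\<kappa>)^m" unfolding \<rho>_def n_def by (simp add: power_one_over)
    also have "\<dots> \<le> (\<delta>/\<kappa>) * (\<delta>0/\<delta>)" using pm d k by (intro mult_left_mono) auto
    also have "\<dots> = r1/2" using d k by (simp add: \<delta>0_def)
    finally show ?thesis using r1 by simp
  qed
  have "\<forall>k\<in>{1..n}. \<exists>z. ball z (\<kappa>*\<rho> k) \<subseteq> \<Omega> \<and> ball z (\<kappa>*\<rho> k) \<subseteq> ball x (\<rho> k) \<and> ball z (\<kappa>*\<rho> k) \<inter> ball x (\<kappa>*\<rho> k) = {}"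
  proof
    fix k assume "k \<in> {1..n}"
    then have "\<rho> k < r1" using rmono[of k n] rn by simp
    then show "\<exists>z. ball z (\<kappa>*\<rho> k) \<subseteq> \<Omega> \<and> ball z (\<kappa>*\<rho> k) \<subseteq> ball x (\<rho> k) \<and> ball z (\<kappa>*\<rho> k) \<inter> ball x (\<kappa>*\<rho> k) = {}"
      using CS x rpos[of k] by blast
  qed
  then obtain Z where Z: "\<forall>k\<in>{1..n}. ball (Z k) (\<kappa>*\<rho> k) \<subseteq> \<Omega> \<and> ball (Z k) (\<kappa>*\<rho> k) \<subseteq> ball x (\<rho> k) \<and> ball (Z k) (\<kappa>*\<rho> k) \<inter> ball x (\<kappa>*\<rho> k) = {}"
    by (rule bchoice[elim_format]) blast
  define B where "B k = ball (Z k) (\<kappa>*\<rho> k)" for k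
  have B1: "B k \<subseteq> \<Omega>" "B k \<subseteq> ball x (\<rho> k)" "B k \<inter> ball x (\<kappa>*\<rho> k) = {}" if "k \<in> {1..n}" for k
    using Z that unfolding B_def by blast+
  have BS: "B k \<subseteq> S" if kk: "k \<in> {1..n}" for k
  proof -
    obtain j where j: "k = Suc j" using kk by (cases k) auto
    have "\<delta> \<le> \<kappa> * \<rho> k" using rmono[of 0 j] r0 rstep[of j] j by simp
    then have "ball x \<delta> \<subseteq> ball x (\<kappa>*\<rho> k)" by (rule subset_ball)
    then show ?thesis using B1[OF kk] unfolding S_def by blast
  qed
  have Bdisj0: "B j \<inter> B k = {}" if jk: "j \<in> {1..n}" "k \<in> {1..n}" "j < k" for j k
  proof -
    obtain i where i: "k = Suc i" "j \<le> i" using jk by (cases k) auto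
    have "\<rho> j \<le> \<kappa> * \<rho> k" using rmono[of j i] rstep[of i] i by simp
    then have "ball x (\<rho> j) \<subseteq> ball x (\<kappa>*\<rho> k)" by (rule subset_ball)
    then show ?thesis using B1[OF jk(1)] B1[OF jk(2)] by blast
  qed
  have Bdisj: "y \<notin> B k" if "j \<in> {1..n}" "k \<in> {1..n}" "j \<noteq> k" "y \<in> B j" for j k y
    using Bdisj0[of j k] Bdisj0[of k j] that by (cases "j < k") auto
  have ynear: "\<delta> \<le> norm (x - y)" if "y \<in> S" for y
    using that unfolding S_def by (simp add: dist_norm)
  define c where "c k = \<rho> k powr Ex" for k
  have fB: "c k \<le> f y" if kk: "k \<in> {1..n}" and y: "y \<in> B k" for k y
  proof -
    have "norm (x - y) < \<rho> k" using B1(2)[OF kk] y by (auto simp: dist_norm)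
    moreover have "0 < norm (x - y)" using ynear[of y] BS[OF kk] y d by auto
    ultimately show ?thesis unfolding c_def f_def using Ex0 by (intro powr_mono2') auto
  qed
  have f0: "0 \<le> f y" for y by (simp add: f_def)
  define G where "G y = (\<Sum>k\<in>{1..n}. c k * indicator (B k) y)" for y
  define F where "F y = (if y \<in> S then f y else 0)" for y
  have GF: "G y \<le> F y" for y
  proof (cases "\<exists>j\<in>{1..n}. y \<in> B j")
    case True
    then obtain j where j: "j \<in> {1..n}" "y \<in> B j" by blast
    have "G y = (\<Sum>k\<in>{1..n}. if k = j then c j else 0)"
      unfolding G_def using Bdisj[OF j(1) _ _ j(2)] j(2) by (intro sum.cong) (auto simp: indicator_def)
    also have "\<dots> = c j" using j(1) by simp
    also have "\<dots> \<le> f y" using fB j by blast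
    also have "\<dots> = F y" using BS[OF j(1)] j(2) unfolding F_def by auto
    finally show ?thesis .
  next
    case False
    then have "G y = 0" unfolding G_def by (intro sum.neutral) (auto simp: indicator_def)
    then show ?thesis using f0 by (simp add: F_def)
  qed
  have Sbnd: "bounded S" unfolding S_def using bnd by (rule bounded_subset) auto
  have Sleb: "S \<in> sets lebesgue" unfolding S_def using opn by (simp add: sets.Diff borel_open)
  have Slm: "S \<in> lmeasurable" using Sbnd Sleb by (rule bounded_set_imp_lmeasurable)
  have cont: "continuous_on S f"
  proof -
    have "\<forall>y\<in>S. norm (x - y) \<noteq> 0" using ynear d by fastforce
    then show ?thesis unfolding f_def by (intro continuous_intros) auto
  qed
  have intS: "f integrable_on S"
  proof (rule measurable_bounded_by_integrable_imp_integrable_real)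
    show "f \<in> borel_measurable (lebesgue_on S)" using cont Sleb by (rule continuous_imp_measurable_on_sets_lebesgue)
    show "(\<lambda>_. \<delta> powr Ex) integrable_on S" using Slm by (rule integrable_on_const)
    show "S \<in> sets lebesgue" by (rule Sleb)
    fix y assume y: "y \<in> S"
    have "f y \<le> \<delta> powr Ex" unfolding f_def using ynear[OF y] d Ex0 by (intro powr_mono2') auto
    then show "\<bar>f y\<bar> \<le> \<delta> powr Ex" using f0[of y] by simp
  qed
  have intF: "F integrable_on UNIV" unfolding F_def using intS by (simp add: integrable_restrict_UNIV)
  have intB: "indicat_real (B k) integrable_on UNIV" for k
    by (simp add: integrable_on_indicator B_def)
  have intG: "G integrable_on UNIV" unfolding G_def
    by (intro integrable_sum finite_atLeastAtMost integrable_on_mult_right intB)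
  have mB: "measure lebesgue (B k) = (\<kappa> * \<rho> k)^N * \<omega>" for k
  proof -
    have "measure lebesgue (B k) = measure lborel (B k)" unfolding B_def by simp
    also have "\<dots> = (\<kappa> * \<rho> k)^N * \<omega>" unfolding B_def \<omega>_def N_def
      using k rpos[of k] by (intro content_ball_conv_unit_ball) simp
    finally show ?thesis .
  qed
  have IG: "integral UNIV G = (\<Sum>k\<in>{1..n}. c k * ((\<kappa> * \<rho> k)^N * \<omega>))"
  proof -
    have "integral UNIV G = (\<Sum>k\<in>{1..n}. integral UNIV (\<lambda>y. c k * indicator (B k) y))"
      unfolding G_def by (intro integral_sum finite_atLeastAtMost integrable_on_mult_right intB)
    also have "\<dots> = (\<Sum>k\<in>{1..n}. c k * integral UNIV (indicat_real (B k)))"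
      by (intro sum.cong refl) simp
    also have "\<dots> = (\<Sum>k\<in>{1..n}. c k * ((\<kappa> * \<rho> k)^N * \<omega>))"
    proof (intro sum.cong refl)
      fix k
      have "integral UNIV (indicat_real (B k)) = measure lebesgue (B k)"
        unfolding B_def by (rule lmeasure_integral_UNIV[OF lmeasurable_ball, symmetric])
      then show "c k * integral UNIV (indicat_real (B k)) = c k * ((\<kappa> * \<rho> k)^N * \<omega>)"
        using mB[of k] by simp
    qed
    finally show ?thesis .
  qed
  have trm: "\<omega> * \<kappa>^N \<le> c k * ((\<kappa> * \<rho> k)^N * \<omega>)" if kk: "k \<in> {1..n}" for k
  proof -
    have rk1: "\<rho> k \<le> 1" using rmono[of k n] kk rn r1 by simp
    have "c k * \<rho> k ^ N = \<rho> k powr Ex * \<rho> k powr real N"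
      unfolding c_def using rpos[of k] by (simp add: powr_realpow)
    also have "\<dots> = \<rho> k powr (-2 * s)" unfolding Ex_def by (simp add: powr_add[symmetric])
    also have "\<dots> \<ge> 1 powr (-2 * s)" using rk1 rpos[of k] s by (intro powr_mono2') auto
    finally have ge1: "1 \<le> c k * \<rho> k ^ N" by simp
    have "c k * ((\<kappa> * \<rho> k)^N * \<omega>) = (\<omega> * \<kappa>^N) * (c k * \<rho> k ^ N)"
      by (simp add: power_mult_distrib algebra_simps)
    also have "\<dots> \<ge> (\<omega> * \<kappa>^N) * 1" using ge1 om k by (intro mult_left_mono) auto
    finally show ?thesis by simp
  qed
  have "real n * (\<omega> * \<kappa>^N) \<le> (\<Sum>k\<in>{1..n}. c k * ((\<kappa> * \<rho> k)^N * \<omega>))"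
  proof -
    have "(\<Sum>k\<in>{1..n}. \<omega> * \<kappa>^N) \<le> (\<Sum>k\<in>{1..n}. c k * ((\<kappa> * \<rho> k)^N * \<omega>))"
      by (rule sum_mono) (rule trm)
    then show ?thesis by simp
  qed
  moreover have "a * (\<omega> * \<kappa>^N) \<le> real n * (\<omega> * \<kappa>^N)" using an om k by (intro mult_right_mono) auto
  moreover have "integral UNIV G \<le> integral UNIV F" using intG intF GF by (intro integral_le) auto
  moreover have "integral UNIV F = integral S f" unfolding F_def by (rule integral_restrict_UNIV)
  moreover have "\<omega> * \<kappa>^N / ln (1/\<kappa>) * ln (\<delta>0/\<delta>) = a * (\<omega> * \<kappa>^N)" unfolding a_def by simp
  ultimately have "\<omega> * \<kappa>^N / ln (1/\<kappa>) * ln (\<delta>0/\<delta>) \<le> integral S f" using IG by linarith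
  then show ?thesis unfolding \<omega>_def N_def \<delta>0_def S_def f_def Ex_def .
qed

theorem lemma4p2:
  fixes \<Omega> :: "'a::euclidean_space set"
  assumes "bounded \<Omega>" and "open \<Omega>" and "\<Omega> \<noteq> {}" and "is_lipschitz_set \<Omega>"
  shows "\<exists>C0>0. \<exists>\<delta>0. 0 < \<delta>0 \<and> \<delta>0 < 1 \<and>
           (\<forall>\<delta> x s. 0 < \<delta> \<and> \<delta> < \<delta>0 \<and> x \<in> closure \<Omega> \<and> 0 \<le> s \<and> s < 1 \<longrightarrow>
              integral (\<Omega> - ball x \<delta>) (\<lambda>y. norm (x - y) powr (- real DIM('a) - 2 * s))
                \<ge> C0 * ln (\<delta>0 / \<delta>))"
proof -
  obtain \<kappa> r where k: "0 < \<kappa>" "\<kappa> < 1" and r: "0 < r" and CS0: "\<forall>x\<in>closure \<Omega>. \<forall>\<rho>. 0 < \<rho> \<and> \<rho> < r \<longrightarrow>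
           (\<exists>z. ball z (\<kappa>*\<rho>) \<subseteq> \<Omega> \<and> ball z (\<kappa>*\<rho>) \<subseteq> ball x \<rho> \<and> ball z (\<kappa>*\<rho>) \<inter> ball x (\<kappa>*\<rho>) = {})"
    using corkscrew[OF assms] by blast
  define r1 where "r1 = min r 1"
  have r1: "0 < r1" "r1 \<le> 1" using r by (auto simp: r1_def)
  have CS: "\<forall>x\<in>closure \<Omega>. \<forall>\<rho>. 0 < \<rho> \<and> \<rho> < r1 \<longrightarrow>
           (\<exists>z. ball z (\<kappa>*\<rho>) \<subseteq> \<Omega> \<and> ball z (\<kappa>*\<rho>) \<subseteq> ball x \<rho> \<and> ball z (\<kappa>*\<rho>) \<inter> ball x (\<kappa>*\<rho>) = {})"
    using CS0 by (simp add: r1_def)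
  define C0 where "C0 = measure lborel (ball (0::'a) 1) * \<kappa>^DIM('a) / ln (1/\<kappa>)"
  have C0: "C0 > 0" unfolding C0_def using k content_ball_pos[of 1 "0::'a"] by simp
  define \<delta>0 where "\<delta>0 = r1*\<kappa>/2"
  have "r1 * \<kappa> \<le> 1" using r1 k by (intro mult_le_one) auto
  then have d0: "0 < \<delta>0" "\<delta>0 < 1" using r1 k unfolding \<delta>0_def by auto
  show ?thesis
  proof (rule exI[of _ C0], rule conjI[OF C0], rule exI[of _ \<delta>0], intro conjI d0 allI impI)
    fix \<delta> :: real and x :: 'a and s :: real assume h: "0 < \<delta> \<and> \<delta> < \<delta>0 \<and> x \<in> closure \<Omega> \<and> 0 \<le> s \<and> s < 1"
    show "C0 * ln (\<delta>0 / \<delta>) \<le> integral (\<Omega> - ball x \<delta>) (\<lambda>y. norm (x - y) powr (- real DIM('a) - 2 * s))"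
      using lower_bound[OF assms(1,2) k r1 CS, of \<delta> x s] h unfolding C0_def \<delta>0_def by blast
  qed
qed

end
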